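(* Let $\mathcal{G}^*=(\mathbb{V}^*,\mathbb{E}^* )$ be a graph that is either an ADMG or a C-DMG, let $\mathbb{W}^*\subseteq\mathbb{V}^*$, and let $\tilde{\pi}=\langle V_1,\dots,V_n\rangle$ be a walk in $\mathcal{G}^*$. If $\tilde{\pi}$ is $\mathbb{W}^*$-active (not blocked by $\mathbb{W}^*$), then its primary path $\tilde{\pi}_p$ is $\mathbb{W}^*$-active.
   Context: An ADMG is a graph with directed edges $\rightarrow$ and bidirected edges $\leftrightarrow$ whose directed edges form no directed cycle; a C-DMG is a graph with directed and bidirected edges (directed cycles and self-loops allowed) obtained from an ADMG by taking a partition of its vertices into clusters as vertices, with a directed (resp. bidirected) edge between clusters iff some members are so connected. A walk is a sequence of vertices with a specified edge between each consecutive pair. The primary path $\tilde{\pi}_p=\langle U_1,\dots,U_m\rangle$ of a walk $\tilde{\pi}=\langle V_1,\dots,V_n\rangle$ is defined by $U_1=V_1$ and $U_{k+1}=V_{j+1}$ where $j=\max\{i: V_i=U_k\}$, until $U_{k+1}=V_n$; the edge between $U_k$ and $U_{k+1}$ in $\tilde{\pi}_p$ is the edge (with the same type and orientation) between $V_j$ and $V_{j+1}$ in $\tilde{\pi}$. $\mathrm{De}(V)$ denotes the descendants of $V$ in $\mathcal{G}^*$, including $V$. A walk $\langle V_1,\dots,V_n\rangle$ is blocked by $\mathbb{W}^*$ if (1) $V_1\in\mathbb{W}^*$ or $V_n\in\mathbb{W}^*$; or (2) for some $1<i<n$ the walk contains $V_{i-1}\,*\!-\!*\,V_i\rightarrow V_{i+1}$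 or $V_{i-1}\leftarrow V_i\,*\!-\!*\,V_{i+1}$ (any edge type for $*\!-\!*$) with $V_i\in\mathbb{W}^*$; or (3) for some $1<i<n$ it contains $V_{i-1}\,*\!\!\rightarrow V_i\leftarrow\!\!*\,V_{i+1}$ (each edge directed into $V_i$ or bidirected) with $\mathrm{De}(V_i)\cap\mathbb{W}^*=\emptyset$. A walk not blocked is active. *)

theory Defs
  imports Main
begin

(* A graph with directed and bidirected edges. Bidirected edges are stored as
   a symmetric set of ordered pairs. *)
record 'v mgraph =
  verts :: "'v set"
  dedges :: "('v \<times> 'v) set"
  bedges :: "('v \<times> 'v) set"

definition mixed_graph :: "'v mgraph \<Rightarrow> bool" where
  "mixed_graph G \<longleftrightarrow> finite (verts G) \<and> dedges G \<subseteq> verts G \<times> verts G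
     \<and> bedges G \<subseteq> verts G \<times> verts G \<and> sym (bedges G)"

definition is_ADMG :: "'v mgraph \<Rightarrow> bool" where
  "is_ADMG G \<longleftrightarrow> mixed_graph G \<and> acyclic (dedges G)"

(* G is the C-DMG obtained from the ADMG H by the partition of verts H into
   clusters given by the labelling c (cluster of a = c a); the vertices of G are
   the (labels of the) clusters. *)
definition is_CDMG_of :: "'b mgraph \<Rightarrow> ('b \<Rightarrow> 'v) \<Rightarrow> 'v mgraph \<Rightarrow> bool" where
  "is_CDMG_of H c G \<longleftrightarrow> is_ADMG H \<and> verts G = c ` verts H
     \<and> dedges G = {(c a, c b) | a b. (a, b) \<in> dedges H}
     \<and> bedges G = {(c a, c b) | a b. (a, b) \<in> bedges H}"

(* Type of the edge specified between V_i and V_{i+1} in a walk: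
   Fwd: V_i \<rightarrow> V_{i+1};  Bwd: V_i \<leftarrow> V_{i+1};  Bi: V_i \<leftrightarrow> V_{i+1} *)
datatype edge = Fwd | Bwd | Bi

fun edge_ok :: "'v mgraph \<Rightarrow> 'v \<Rightarrow> edge \<Rightarrow> 'v \<Rightarrow> bool" where
  "edge_ok G a Fwd b = ((a, b) \<in> dedges G)"
| "edge_ok G a Bwd b = ((b, a) \<in> dedges G)"
| "edge_ok G a Bi b = ((a, b) \<in> bedges G)"

(* A walk <V_1,...,V_n> is the vertex list vs (0-indexed) together with the list
   es of specified edges, es!i being the edge between vs!i and vs!(i+1). *)
definition is_walk :: "'v mgraph \<Rightarrow> 'v list \<Rightarrow> edge list \<Rightarrow> bool" where
  "is_walk G vs es \<longleftrightarrow> vs \<noteq> [] \<and> length es = length vs - 1 \<and> set vs \<subseteq> verts G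
     \<and> (\<forall>i < length es. edge_ok G (vs ! i) (es ! i) (vs ! Suc i))"

definition De :: "'v mgraph \<Rightarrow> 'v \<Rightarrow> 'v set" where
  "De G v = {w. (v, w) \<in> (dedges G)\<^sup>*}"

definition blocked :: "'v mgraph \<Rightarrow> 'v set \<Rightarrow> 'v list \<Rightarrow> edge list \<Rightarrow> bool" where
  "blocked G W vs es \<longleftrightarrow>
     hd vs \<in> W \<or> last vs \<in> W \<or>
     (\<exists>i. 0 < i \<and> Suc i < length vs \<and>
        (((es ! i = Fwd \<or> es ! (i - 1) = Bwd) \<and> vs ! i \<in> W) \<or>
         ((es ! (i - 1) = Fwd \<or> es ! (i - 1) = Bi) \<and> (es ! i = Bwd \<or> es ! i = Bi)
           \<and> De G (vs ! i) \<inter> W = {})))"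

definition active :: "'v mgraph \<Rightarrow> 'v set \<Rightarrow> 'v list \<Rightarrow> edge list \<Rightarrow> bool" where
  "active G W vs es \<longleftrightarrow> \<not> blocked G W vs es"

definition lastidx :: "'v list \<Rightarrow> 'v \<Rightarrow> nat" where
  "lastidx vs v = Max {i. i < length vs \<and> vs ! i = v}"

lemma lastidx_ge: "i < length vs \<Longrightarrow> i \<le> lastidx vs (vs ! i)"
  unfolding lastidx_def by (rule Max_ge) auto

function prim_from :: "'v list \<Rightarrow> edge list \<Rightarrow> nat \<Rightarrow> 'v list \<times> edge list" where
  "prim_from vs es i =
     (if length vs \<le> i then ([], [])
      else (let j = lastidx vs (vs ! i) in
            if length vs \<le> Suc j then ([vs ! i], [])
            else (case prim_from vs es (Suc j) of (us, fs) \<Rightarrow> (vs ! i # us, es ! j # fs))))"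
  by pat_completeness auto
termination
  by (relation "measure (\<lambda>(vs, es, i). length vs - i)")
     (auto simp: Let_def, metis lastidx_ge diff_less_mono2 le_imp_less_Suc not_le)

definition primary_path :: "'v list \<Rightarrow> edge list \<Rightarrow> 'v list \<times> edge list" where
  "primary_path vs es = prim_from vs es 0"

end

theory Submission
  imports Defs
begin

lemma lastidx_props:
  assumes "i < length vs"
  shows "lastidx vs (vs ! i) < length vs \<and> vs ! (lastidx vs (vs ! i)) = vs ! i
         \<and> i \<le> lastidx vs (vs ! i)"
proof -
  have fin: "finite {k. k < length vs \<and> vs ! k = vs ! i}" by auto
  have ne: "{k. k < length vs \<and> vs ! k = vs ! i} \<noteq> {}" using assms by auto
  have "lastidx vs (vs ! i) \<in> {k. k < length vs \<and> vs ! k = vs ! i}"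
    unfolding lastidx_def using Max_in[OF fin ne] .
  then show ?thesis using lastidx_ge[OF assms] by auto
qed

lemma prim_char:
  "i < length vs \<Longrightarrow> \<exists>ps. length ps = length (fst (prim_from vs es i))
     \<and> length (snd (prim_from vs es i)) = length ps - 1 \<and> ps \<noteq> [] \<and> ps ! 0 = i
     \<and> (\<forall>k<length ps. ps ! k < length vs \<and> fst (prim_from vs es i) ! k = vs ! (ps ! k))
     \<and> (\<forall>k. Suc k < length ps \<longrightarrow> ps ! Suc k = Suc (lastidx vs (vs ! (ps ! k)))
            \<and> snd (prim_from vs es i) ! k = es ! (lastidx vs (vs ! (ps ! k))))
     \<and> length vs \<le> Suc (lastidx vs (vs ! last ps))"
proof (induction vs es i rule: prim_from.induct)
  case (1 vs es i)
  define j where "j = lastidx vs (vs ! i)"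
  show ?case
  proof (cases "length vs \<le> Suc j")
    case True
    have "prim_from vs es i = ([vs ! i], [])"
      using 1(2) True by (subst prim_from.simps) (simp add: j_def Let_def)
    then show ?thesis using 1(2) True
      by (intro exI[of _ "[i]"]) (auto simp: j_def)
  next
    case False
    obtain us fs where P: "prim_from vs es (Suc j) = (us, fs)" by force
    have eq: "prim_from vs es i = (vs ! i # us, es ! j # fs)"
      using 1(2) False P by (subst prim_from.simps) (simp add: j_def Let_def)
    from 1(1)[OF _ j_def _] 1(2) False
    have IH0: "\<exists>ps. length ps = length (fst (prim_from vs es (Suc j)))
     \<and> length (snd (prim_from vs es (Suc j))) = length ps - 1 \<and> ps \<noteq> [] \<and> ps ! 0 = Suc j
     \<and> (\<forall>k<length ps. ps ! k < length vs \<and> fst (prim_from vs es (Suc j)) ! k = vs ! (ps ! k))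
     \<and> (\<forall>k. Suc k < length ps \<longrightarrow> ps ! Suc k = Suc (lastidx vs (vs ! (ps ! k)))
            \<and> snd (prim_from vs es (Suc j)) ! k = es ! (lastidx vs (vs ! (ps ! k))))
     \<and> length vs \<le> Suc (lastidx vs (vs ! last ps))"
      by simp
    then obtain ps where ps: "length ps = length us" "length fs = length ps - 1" "ps \<noteq> []"
      "ps ! 0 = Suc j"
      "\<forall>k<length ps. ps ! k < length vs \<and> us ! k = vs ! (ps ! k)"
      "\<forall>k. Suc k < length ps \<longrightarrow> ps ! Suc k = Suc (lastidx vs (vs ! (ps ! k)))
            \<and> fs ! k = es ! (lastidx vs (vs ! (ps ! k)))"
      "length vs \<le> Suc (lastidx vs (vs ! last ps))"
      using P by auto
    show ?thesis
    proof (intro exI[of _ "i # ps"], unfold eq fst_conv snd_conv, intro conjI allI impI)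
      fix k assume k: "k < length (i # ps)"
      show "(i # ps) ! k < length vs" using k ps(5) 1(2) by (cases k) auto
      show "(vs ! i # us) ! k = vs ! ((i # ps) ! k)" using k ps(5) by (cases k) auto
    next
      fix k assume k: "Suc k < length (i # ps)"
      show "(i # ps) ! Suc k = Suc (lastidx vs (vs ! ((i # ps) ! k)))"
        using k ps(4,6) j_def by (cases k) auto
      show "(es ! j # fs) ! k = es ! lastidx vs (vs ! ((i # ps) ! k))"
        using k ps(6) j_def by (cases k) auto
    qed (use ps 1(2) in \<open>auto simp: last_ConsR\<close>, metis Suc_pred length_greater_0_conv ps(1,3))
  qed
qed


lemma collider_chain:
  assumes walk: "is_walk G vs es"
    and a: "0 < a" and b: "Suc b < length vs" and Wd: "De G v \<inter> W = {}"
    and into: "es ! b = Bwd \<or> es ! b = Bi"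
  shows "k + d = b \<Longrightarrow> a \<le> k \<Longrightarrow> (es ! (k - 1) = Fwd \<or> es ! (k - 1) = Bi)
         \<Longrightarrow> vs ! k \<in> De G v \<Longrightarrow> blocked G W vs es"
proof (induction d arbitrary: k)
  case 0
  have "De G (vs ! k) \<subseteq> De G v" using 0(4) unfolding De_def
    by (auto intro: rtrancl_trans)
  then have "De G (vs ! k) \<inter> W = {}" using Wd by auto
  then show ?case unfolding blocked_def using 0 a b into
    by (intro disjI2 exI[of _ k]) auto
next
  case (Suc d)
  have kk: "0 < k" "Suc k < length vs" using Suc.prems a b by auto
  have sub: "De G (vs ! k) \<subseteq> De G v" using Suc(5) unfolding De_def
    by (auto intro: rtrancl_trans)
  show ?case
  proof (cases "es ! k")
    case Fwd
    have "k < length es" using walk kk unfolding is_walk_def by auto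
    then have "(vs ! k, vs ! Suc k) \<in> dedges G" using walk Fwd unfolding is_walk_def by force
    then have "vs ! Suc k \<in> De G v" using Suc(5) unfolding De_def by auto
    then show ?thesis using Suc.IH[of "Suc k"] Suc.prems Fwd by auto
  next
    case Bwd
    then show ?thesis unfolding blocked_def using kk Suc.prems sub Wd
      by (intro disjI2 exI[of _ k]) auto
  next
    case Bi
    then show ?thesis unfolding blocked_def using kk Suc.prems sub Wd
      by (intro disjI2 exI[of _ k]) auto
  qed
qed

lemma collider_blocked:
  assumes walk: "is_walk G vs es"
    and a: "0 < a" "a \<le> b" and b: "Suc b < length vs" and Wd: "De G (vs ! a) \<inter> W = {}"
    and into1: "es ! (a - 1) = Fwd \<or> es ! (a - 1) = Bi"
    and into: "es ! b = Bwd \<or> es ! b = Bi"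
  shows "blocked G W vs es"
  using collider_chain[OF walk a(1) b Wd into, of a "b - a"] a into1
  unfolding De_def by auto

theorem mainTheorem6:
  fixes G :: "'v mgraph" and H :: "'b mgraph" and c :: "'b \<Rightarrow> 'v"
    and W :: "'v set" and vs :: "'v list" and es :: "edge list"
  assumes "is_ADMG G \<or> is_CDMG_of H c G"
    and "W \<subseteq> verts G"
    and "is_walk G vs es"
    and "active G W vs es"
  shows "active G W (fst (primary_path vs es)) (snd (primary_path vs es))"
proof -
  note walk = assms(3)
  have ne: "0 < length vs" using walk unfolding is_walk_def by auto
  obtain ps where ps: "length ps = length (fst (prim_from vs es 0))"
     "length (snd (prim_from vs es 0)) = length ps - 1" "ps \<noteq> []" "ps ! 0 = 0"
     "\<forall>k<length ps. ps ! k < length vs \<and> fst (prim_from vs es 0) ! k = vs ! (ps ! k)"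
     "\<forall>k. Suc k < length ps \<longrightarrow> ps ! Suc k = Suc (lastidx vs (vs ! (ps ! k)))
            \<and> snd (prim_from vs es 0) ! k = es ! (lastidx vs (vs ! (ps ! k)))"
     "length vs \<le> Suc (lastidx vs (vs ! last ps))"
    using prim_char[OF ne, of es] by blast
  define us where "us = fst (prim_from vs es 0)"
  define fs where "fs = snd (prim_from vs es 0)"
  define L where "L k = lastidx vs (vs ! (ps ! k))" for k
  have LP: "L k < length vs \<and> vs ! L k = vs ! (ps ! k) \<and> ps ! k \<le> L k" if "k < length ps" for k
    using lastidx_props[of "ps ! k" vs] ps(5) that unfolding L_def by auto
  have us_k: "us ! k = vs ! (ps ! k)" if "k < length ps" for k using ps(5) that us_def by auto
  have step: "ps ! Suc k = Suc (L k)" "fs ! k = es ! L k" if "Suc k < length ps" for k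
    using ps(6) that unfolding L_def fs_def by auto
  have "\<not> blocked G W us fs"
  proof
    assume bl: "blocked G W us fs"
    have nb: "\<not> blocked G W vs es" using assms(4) unfolding active_def .
    have lenus: "length us = length ps" using ps(1) us_def by simp
    have hd1: "hd us = hd vs"
      using us_k[of 0] ps(3,4) lenus ne by (metis hd_conv_nth length_0_conv length_greater_0_conv)
    have lastL: "L (length ps - 1) = length vs - 1"
    proof -
      have "length ps - 1 < length ps" using ps(3) by simp
      then have "L (length ps - 1) < length vs" using LP by blast
      moreover have "length vs \<le> Suc (L (length ps - 1))"
        using ps(7) ps(3) by (simp add: L_def last_conv_nth)
      ultimately show ?thesis by linarith
    qed
    have last1: "last us = last vs"
    proof -
      have "last us = us ! (length ps - 1)" using lenus ps(3) by (metis last_conv_nth length_0_conv)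
      also have "\<dots> = vs ! L (length ps - 1)" using us_k LP ps(3) by simp
      also have "\<dots> = last vs" using lastL ne by (simp add: last_conv_nth)
      finally show ?thesis .
    qed
    from bl consider "hd us \<in> W" | "last us \<in> W" |
      i where "0 < i" "Suc i < length us"
        "((fs ! i = Fwd \<or> fs ! (i - 1) = Bwd) \<and> us ! i \<in> W) \<or>
         ((fs ! (i - 1) = Fwd \<or> fs ! (i - 1) = Bi) \<and> (fs ! i = Bwd \<or> fs ! i = Bi)
           \<and> De G (us ! i) \<inter> W = {})"
      unfolding blocked_def by blast
    then show False
    proof cases
      case 1 then show False using nb hd1 unfolding blocked_def by auto
    next
      case 2 then show False using nb last1 unfolding blocked_def by auto
    next
      case (3 i)
      have i1: "Suc i < length ps" using 3 lenus by simp
      have s1: "ps ! i = Suc (L (i - 1))" "fs ! (i - 1) = es ! L (i - 1)"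
        using step[of "i - 1"] i1 3(1) by auto
      have s2: "ps ! Suc i = Suc (L i)" "fs ! i = es ! L i" using step i1 by auto
      have Li: "L i < length vs" "vs ! L i = vs ! (ps ! i)" "ps ! i \<le> L i"
        using LP[of i] i1 by auto
      have LSi: "ps ! Suc i < length vs" using ps(5) i1 by auto
      have ui: "us ! i = vs ! (ps ! i)" using us_k i1 by auto
      have pi0: "0 < ps ! i" using s1 by simp
      have esi: "es ! (ps ! i - 1) = fs ! (i - 1)" using s1 by simp
      from 3(3) consider "fs ! i = Fwd" "us ! i \<in> W" | "fs ! (i - 1) = Bwd" "us ! i \<in> W"
        | "fs ! (i - 1) = Fwd \<or> fs ! (i - 1) = Bi" "fs ! i = Bwd \<or> fs ! i = Bi"
          "De G (us ! i) \<inter> W = {}" by blast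
      then show False
      proof cases
        case 1
        then have "blocked G W vs es" unfolding blocked_def
          using s2 Li LSi ui pi0 by (intro disjI2 exI[of _ "L i"]) auto
        then show False using nb by simp
      next
        case 2
        then have "blocked G W vs es" unfolding blocked_def
          using s2 Li LSi ui pi0 esi by (intro disjI2 exI[of _ "ps ! i"]) auto
        then show False using nb by simp
      next
        case 3
        note h = this
        have "blocked G W vs es"
        proof (rule collider_blocked[OF walk pi0 Li(3)])
          show "Suc (L i) < length vs" using s2 LSi by simp
          show "De G (vs ! (ps ! i)) \<inter> W = {}" using h ui by simp
          show "es ! (ps ! i - 1) = Fwd \<or> es ! (ps ! i - 1) = Bi" using h esi by simp
          show "es ! L i = Bwd \<or> es ! L i = Bi" using h s2 by simp
        qed
        then show False using nb by simp
      qed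
    qed
  qed
  then show ?thesis unfolding active_def primary_path_def us_def fs_def .
qed

end
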